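(* Under the hypotheses of Theorem 1 (walk $\{S_n\}$, stationary scenery $\{\xi(k)\}$ independent of the walk, $n\mathbb{P}(\xi(0)>u_n)\to\tau\ge0$, conditions $D(u_n)$ and $D'(u_n)$ with sequences $(\alpha_{n,l})$, $(l_n)$, $(k_n)$), and with the blocks $B_j$, stripes $L_j$, $\mathcal{L}_n$ and $K_n$ defined in the context, for almost every realization of $\{S_n,n\in\mathbb{N}_+\}$ the following hold as $n\to\infty$: (i) $\mathbb{P}(M_{\mathcal{S}_n}\le u_n)-\mathbb{P}(M_{\mathcal{S}_n\setminus\mathcal{L}_n}\le u_n)\to0$; (ii) $\mathbb{P}(M_{\mathcal{S}_n\setminus\mathcal{L}_n}\le u_n)-\prod_{j\le K_n}\mathbb{P}(M_{B_j\setminus\mathcal{L}_n}\le u_n)\to0$; (iii) $\prod_{j\le K_n}\mathbb{P}(M_{B_j\setminus\mathcal{L}_n}\le u_n)-\prod_{j\le K_n}\mathbb{P}(M_{B_j}\le u_n)\to0$. All probabilities are with respect to the scenery, with the realization of the walk fixed.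
   Context: Setting: $\{X_k\}$ centered integer-valued i.i.d., in the domain of attraction of an $\alpha$-stable law with $\alpha\in(0,1)$, $S_n=X_1+\cdots+X_n$; $\{\xi(k),k\in\mathbb{Z}\}$ stationary real random variables independent of $\{X_k\}$; $n\mathbb{P}(\xi(0)>u_n)\to\tau\ge0$. Condition $D(u_n)$: with $F_{i_1,\ldots,i_p}(u)=\mathbb{P}(\xi(i_1)\le u,\ldots,\xi(i_p)\le u)$, there exist $(\alpha_{n,l})_{(n,l)\in\mathbb{N}^2}$ and positive integers $(l_n)$ with $\alpha_{n,l_n}\to0$, $l_n=o(n)$, such that $|F_{i_1,\ldots,i_p,j_1,\ldots,j_{p'}}(u_n)-F_{i_1,\ldots,i_p}(u_n)F_{j_1,\ldots,j_{p'}}(u_n)|\le\alpha_{n,l}$ whenever $i_1<\cdots<i_p<j_1<\cdots<j_{p'}$ and $j_1-i_p\ge l$, uniformly in $p,p'$. Condition $D'(u_n)$: there exist integers $(k_n)$ with $k_n\to\infty$, $\frac{n^2}{k_n}\alpha_{n,l_n}\to0$, $k_nl_n=o(n)$, and $n\sum_{j=1}^{\lfloor n/k_n\rfloor}\mathbb{P}(\xi(0)>u_n,\xi(j)>u_n)\to0$. Notation: for $B\subset\mathbb{Z}$, $M_B=\max_{k\in B}\xi(k)$ (with $M_\emptyset=-\infty$). For a fixed realization of the walk, $\mathcal{S}_n=\{S_1,\ldots,S_n\}$, $R_n=\#\mathcal{S}_n$, $r_n=\lfloor n/(k_n-1)\rfloor+1$, $K_n=\lfloor R_n/r_n\rfloor+1$.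 The blocks $B_1,\ldots,B_{K_n}$ are the unique subsets of $\mathcal{S}_n$ with $\bigcup_{j\le K_n}B_j=\mathcal{S}_n$, $\#B_i=r_n$ and $\max B_i<\min B_{i+1}$ for $i\le K_n-1$ (so $\#B_{K_n}=R_n-(K_n-1)r_n$ and $K_n\le k_n$). For $j\le K_n-1$, the stripe $L_j$ is the set of the $l_n$ largest elements of $B_j$; $L_{K_n}$ is the set of the $l_n$ largest elements of $B_{K_n}$ if $\#B_{K_n}\ge l_n$, and $L_{K_n}=\emptyset$ otherwise. $\mathcal{L}_n=\bigcup_{j\le K_n}L_j$. *)

theory Defs
  imports "HOL-Probability.Probability"
begin

definition stable_law :: "real \<Rightarrow> real measure \<Rightarrow> bool" where
  "stable_law \<alpha> \<mu> \<longleftrightarrow> real_distribution \<mu> \<and>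
     (\<exists>c \<beta> \<gamma>. c > 0 \<and> -1 \<le> \<beta> \<and> \<beta> \<le> 1 \<and>
        (\<forall>t. char \<mu> t = exp (- complex_of_real (c * \<bar>t\<bar> powr \<alpha>)
              * (1 - \<i> * complex_of_real (\<beta> * sgn t * tan (pi * \<alpha> / 2)))
              + \<i> * complex_of_real (\<gamma> * t))))"

definition walk_S :: "(nat \<Rightarrow> 'w \<Rightarrow> int) \<Rightarrow> nat \<Rightarrow> 'w \<Rightarrow> int" where
  "walk_S X n \<omega> = (\<Sum>i\<in>{1..n}. X i \<omega>)"

definition centered_domain_of_attraction ::
  "'w measure \<Rightarrow> (nat \<Rightarrow> 'w \<Rightarrow> int) \<Rightarrow> real \<Rightarrow> bool" where
  "centered_domain_of_attraction M X \<alpha> \<longleftrightarrow>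
     (\<exists>a :: nat \<Rightarrow> real. \<exists>\<mu>. (\<forall>n. a n > 0) \<and> stable_law \<alpha> \<mu> \<and>
        weak_conv_m (\<lambda>n. distr M borel (\<lambda>\<omega>. real_of_int (walk_S X n \<omega>) / a n)) \<mu>)"

definition range_set :: "(nat \<Rightarrow> 'w \<Rightarrow> int) \<Rightarrow> nat \<Rightarrow> 'w \<Rightarrow> int set" where
  "range_set X n \<omega> = (\<lambda>i. walk_S X i \<omega>) ` {1..n}"

definition block_len :: "(nat \<Rightarrow> nat) \<Rightarrow> nat \<Rightarrow> nat" where
  "block_len k n = n div (k n - 1) + 1"

definition num_blocks :: "(nat \<Rightarrow> nat) \<Rightarrow> (nat \<Rightarrow> 'w \<Rightarrow> int) \<Rightarrow> nat \<Rightarrow> 'w \<Rightarrow> nat" where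
  "num_blocks k X n \<omega> = card (range_set X n \<omega>) div block_len k n + 1"

definition block :: "(nat \<Rightarrow> nat) \<Rightarrow> (nat \<Rightarrow> 'w \<Rightarrow> int) \<Rightarrow> nat \<Rightarrow> 'w \<Rightarrow> nat \<Rightarrow> int set" where
  "block k X n \<omega> j = set (take (block_len k n)
       (drop ((j - 1) * block_len k n) (sorted_list_of_set (range_set X n \<omega>))))"

(* the m largest elements of a finite set B (all of B if card B < m) *)
definition top_elems :: "nat \<Rightarrow> int set \<Rightarrow> int set" where
  "top_elems m B = set (drop (card B - m) (sorted_list_of_set B))"

definition stripe :: "(nat \<Rightarrow> nat) \<Rightarrow> (nat \<Rightarrow> nat) \<Rightarrow> (nat \<Rightarrow> 'w \<Rightarrow> int) \<Rightarrow> nat \<Rightarrow> 'w \<Rightarrow> nat \<Rightarrow> int set" where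
  "stripe k l X n \<omega> j =
     (if j < num_blocks k X n \<omega> \<or> l n \<le> card (block k X n \<omega> j)
      then top_elems (l n) (block k X n \<omega> j) else {})"

definition stripes :: "(nat \<Rightarrow> nat) \<Rightarrow> (nat \<Rightarrow> nat) \<Rightarrow> (nat \<Rightarrow> 'w \<Rightarrow> int) \<Rightarrow> nat \<Rightarrow> 'w \<Rightarrow> int set" where
  "stripes k l X n \<omega> = (\<Union>j\<in>{1..num_blocks k X n \<omega>}. stripe k l X n \<omega> j)"

(* P(M_B \<le> u) with M_{} = -\<infinity> *)
definition prob_max_le :: "'s measure \<Rightarrow> (int \<Rightarrow> 's \<Rightarrow> real) \<Rightarrow> int set \<Rightarrow> real \<Rightarrow> real" where
  "prob_max_le N \<xi> B u = measure N {s \<in> space N. \<forall>i\<in>B. \<xi> i s \<le> u}"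

end

theory Submission
  imports Defs
begin


lemma mem_take_drop:
  "x \<in> set (take r (drop d xs)) \<longleftrightarrow> (\<exists>i. d \<le> i \<and> i < d + r \<and> i < length xs \<and> x = xs!i)"
proof
  assume "x \<in> set (take r (drop d xs))"
  then obtain t where t: "t < length (take r (drop d xs))" "x = take r (drop d xs) ! t"
    by (auto simp: in_set_conv_nth)
  then show "\<exists>i. d \<le> i \<and> i < d + r \<and> i < length xs \<and> x = xs!i"
    by (intro exI[of _ "d + t"]) auto
next
  assume "\<exists>i. d \<le> i \<and> i < d + r \<and> i < length xs \<and> x = xs!i"
  then obtain i where i: "d \<le> i" "i < d + r" "i < length xs" "x = xs!i" by blast
  then have "take r (drop d xs) ! (i - d) = x" "i - d < length (take r (drop d xs))" by auto
  then show "x \<in> set (take r (drop d xs))" by (metis nth_mem)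
qed

lemma strict_sorted_gap:
  fixes ys :: "int list"
  assumes "sorted_wrt (<) ys" "i + t < length ys"
  shows "ys ! i + int t \<le> ys ! (i + t)"
  using assms(2)
proof (induction t)
  case 0 then show ?case by simp
next
  case (Suc t)
  then have "ys ! i + int t \<le> ys ! (i + t)" by simp
  moreover have "ys ! (i + t) < ys ! (i + Suc t)"
    using sorted_wrt_nth_less[OF assms(1), of "i+t" "i + Suc t"] Suc.prems by simp
  ultimately show ?case by simp
qed

lemma block_less:
  assumes "1 \<le> j" "j < j'" "x \<in> block k X n \<omega> j" "y \<in> block k X n \<omega> j'"
  shows "x < y"
proof -
  let ?r = "block_len k n"
  let ?xs = "sorted_list_of_set (range_set X n \<omega>)"
  obtain i where i: "(j-1)*?r \<le> i" "i < (j-1)*?r + ?r" "i < length ?xs" "x = ?xs!i"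
    using assms(3) unfolding block_def mem_take_drop by blast
  obtain i' where i': "(j'-1)*?r \<le> i'" "i' < length ?xs" "y = ?xs!i'"
    using assms(4) unfolding block_def mem_take_drop by blast
  have "(j-1)*?r + ?r = j * ?r" using assms(1) by (cases j) auto
  also have "\<dots> \<le> (j'-1)*?r" using assms by (intro mult_right_mono) auto
  finally have "i < i'" using i i' by linarith
  then show ?thesis using i i' sorted_wrt_nth_less[OF strict_sorted_list_of_set] by auto
qed

lemma block_disj:
  assumes "1 \<le> j" "1 \<le> j'" "j \<noteq> j'"
  shows "block k X n \<omega> j \<inter> block k X n \<omega> j' = {}"
proof (cases "j < j'")
  case True then show ?thesis using block_less[of j j' _ k X n \<omega>] assms by fastforce
next
  case False then have "j' < j" using assms by simp
  then show ?thesis using block_less[of j' j _ k X n \<omega>] assms by fastforce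
qed

lemma range_finite: "finite (range_set X n \<omega>)"
  unfolding range_set_def by simp

lemma range_card: "card (range_set X n \<omega>) \<le> n"
  unfolding range_set_def using card_image_le[of "{1..n}"] by simp

lemma block_sub: "block k X n \<omega> j \<subseteq> range_set X n \<omega>"
  unfolding block_def using set_take_subset set_drop_subset range_finite
  by (metis dual_order.trans set_sorted_list_of_set)

lemma block_finite: "finite (block k X n \<omega> j)"
  unfolding block_def by simp

lemma blocks_cover:
  "(\<Union>j\<in>{1..num_blocks k X n \<omega>}. block k X n \<omega> j) = range_set X n \<omega>"
proof
  show "(\<Union>j\<in>{1..num_blocks k X n \<omega>}. block k X n \<omega> j) \<subseteq> range_set X n \<omega>"
    using block_sub[of k X n \<omega>] by (meson UN_least)
next
  let ?r = "block_len k n"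
  let ?xs = "sorted_list_of_set (range_set X n \<omega>)"
  have r: "?r > 0" unfolding block_len_def by simp
  show "range_set X n \<omega> \<subseteq> (\<Union>j\<in>{1..num_blocks k X n \<omega>}. block k X n \<omega> j)"
  proof
    fix x assume "x \<in> range_set X n \<omega>"
    then have "x \<in> set ?xs" using range_finite[of X n \<omega>] by simp
    then obtain i where i: "i < length ?xs" "x = ?xs!i" by (auto simp: in_set_conv_nth)
    define j where "j = i div ?r + 1"
    have "(j-1)*?r \<le> i" using div_mult_mod_eq[of i ?r] unfolding j_def by (metis add_diff_cancel_right' le_add1)
    have m: "i mod ?r < ?r" using r by simp
    have jj: "j - 1 = i div ?r" unfolding j_def by simp
    have "i < (j-1)*?r + ?r" unfolding jj using m div_mult_mod_eq[of i ?r] by linarith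
    moreover note \<open>(j-1)*?r \<le> i\<close>
    ultimately have xb: "x \<in> block k X n \<omega> j" unfolding block_def mem_take_drop using i by blast
    have "length ?xs = card (range_set X n \<omega>)" by simp
    then have jr: "j \<in> {1..num_blocks k X n \<omega>}" unfolding j_def num_blocks_def
      using i(1) div_le_mono by auto
    show "x \<in> (\<Union>j\<in>{1..num_blocks k X n \<omega>}. block k X n \<omega> j)" using xb jr by blast
  qed
qed

lemma top_elems_card: "card (top_elems m B) \<le> m"
  unfolding top_elems_def by (rule order_trans[OF card_length]) simp

lemma top_elems_sub: "finite B \<Longrightarrow> top_elems m B \<subseteq> B"
  unfolding top_elems_def by (metis set_drop_subset set_sorted_list_of_set)

lemma stripe_sub: "stripe k l X n \<omega> j \<subseteq> block k X n \<omega> j"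
  unfolding stripe_def using top_elems_sub[OF block_finite[of k X n \<omega> j], of "l n"] by auto

lemma stripe_card: "card (stripe k l X n \<omega> j) \<le> l n"
  unfolding stripe_def using top_elems_card by auto

lemma stripes_card: "card (stripes k l X n \<omega>) \<le> num_blocks k X n \<omega> * l n"
proof -
  have "card (stripes k l X n \<omega>) \<le> (\<Sum>j\<in>{1..num_blocks k X n \<omega>}. card (stripe k l X n \<omega> j))"
    unfolding stripes_def by (rule card_UN_le) simp
  also have "\<dots> \<le> (\<Sum>j\<in>{1..num_blocks k X n \<omega>}. l n)" by (intro sum_mono stripe_card)
  finally show ?thesis by simp
qed

lemma stripes_sub: "stripes k l X n \<omega> \<subseteq> range_set X n \<omega>"
  unfolding stripes_def using stripe_sub[of k l X n \<omega>] block_sub[of k X n \<omega>]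
  by (meson UN_least order_trans)

lemma top_gap:
  fixes B :: "int set"
  assumes "finite B" "x \<in> B" "x \<notin> top_elems m B"
  shows "\<exists>z\<in>B. x + int m \<le> z"
proof -
  let ?ys = "sorted_list_of_set B"
  have len: "length ?ys = card B" by simp
  obtain i where i: "i < length ?ys" "x = ?ys ! i" using assms
    by (metis in_set_conv_nth set_sorted_list_of_set)
  have "i + m < length ?ys"
  proof (rule ccontr)
    assume "\<not> ?thesis"
    then have "card B - m \<le> i" using len by linarith
    then have "drop (card B - m) ?ys ! (i - (card B - m)) = x" "i - (card B - m) < length (drop (card B - m) ?ys)"
      using i len by auto
    then have "x \<in> set (drop (card B - m) ?ys)" by (metis nth_mem)
    then show False using assms(3) unfolding top_elems_def by simp
  qed
  then have "x + int m \<le> ?ys ! (i + m)" using strict_sorted_gap[OF strict_sorted_list_of_set] i by simp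
  moreover have "?ys ! (i+m) \<in> B" using \<open>i + m < length ?ys\<close> assms(1)
    by (metis nth_mem set_sorted_list_of_set)
  ultimately show ?thesis by blast
qed

lemma gap:
  assumes "1 \<le> j" "j < j'" "j' \<le> num_blocks k X n \<omega>"
    "x \<in> block k X n \<omega> j - stripes k l X n \<omega>" "y \<in> block k X n \<omega> j'"
  shows "x + int (l n) \<le> y"
proof -
  have st: "stripe k l X n \<omega> j = top_elems (l n) (block k X n \<omega> j)"
    unfolding stripe_def using assms(2,3) by simp
  have "j \<in> {1..num_blocks k X n \<omega>}" using assms by auto
  then have sub: "stripe k l X n \<omega> j \<subseteq> stripes k l X n \<omega>"
    unfolding stripes_def by blast
  have xb: "x \<in> block k X n \<omega> j" using assms(4) by blast
  have "x \<notin> top_elems (l n) (block k X n \<omega> j)" using st sub assms(4) by blast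
  then obtain z where z: "z \<in> block k X n \<omega> j" "x + int (l n) \<le> z"
    using top_gap[OF block_finite[of k X n \<omega> j] xb] by blast
  have "z < y" using block_less[OF assms(1,2) z(1) assms(5)] .
  then show ?thesis using z(2) by simp
qed

lemma num_blocks_le:
  assumes "k n \<ge> 2"
  shows "num_blocks k X n \<omega> \<le> k n"
proof -
  let ?d = "k n - 1" let ?r = "block_len k n"
  have d: "?d > 0" using assms by simp
  have m: "n mod ?d < ?d" using d by simp
  have rd: "?r * ?d = (n div ?d) * ?d + ?d" unfolding block_len_def by (simp only: distrib_right mult_1)
  have "n < ?r * ?d" unfolding rd using m div_mult_mod_eq[of n ?d] by linarith
  then have "n div ?r < ?d" by (metis less_mult_imp_div_less mult.commute)
  moreover have "card (range_set X n \<omega>) div ?r \<le> n div ?r" by (rule div_le_mono[OF range_card])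
  ultimately show ?thesis unfolding num_blocks_def by linarith
qed



lemma pml_sets: "(\<And>i. \<xi> i \<in> borel_measurable N) \<Longrightarrow> finite B \<Longrightarrow>
   {s\<in>space N. \<forall>i\<in>B. \<xi> i s \<le> (u::real)} \<in> sets N"
  by measurable

lemma pml_bounds: "prob_space N \<Longrightarrow> 0 \<le> prob_max_le N \<xi> B u \<and> prob_max_le N \<xi> B u \<le> 1"
  unfolding prob_max_le_def by (simp add: prob_space.prob_le_1)

lemma pml_empty: "prob_space N \<Longrightarrow> prob_max_le N \<xi> {} u = 1"
  unfolding prob_max_le_def by (simp add: prob_space.prob_space)

lemma pml_diff:
  assumes N: "prob_space N" and meas: "\<And>i. \<xi> i \<in> borel_measurable N"
    and AB: "A \<subseteq> B" "finite B"
    and p: "\<And>i. measure N {s\<in>space N. \<xi> i s > u} = p"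
  shows "prob_max_le N \<xi> B u \<le> prob_max_le N \<xi> A u"
    "prob_max_le N \<xi> A u - prob_max_le N \<xi> B u \<le> real (card (B - A)) * p"
proof -
  interpret prob_space N by fact
  have fA: "finite A" using AB finite_subset by blast
  let ?E = "\<lambda>C. {s\<in>space N. \<forall>i\<in>C. \<xi> i s \<le> u}"
  let ?F = "\<lambda>i. {s\<in>space N. \<xi> i s > u}"
  have EA: "?E A \<in> sets N" and EB: "?E B \<in> sets N" using pml_sets[of \<xi> N, OF meas] AB fA by auto
  have F: "?F i \<in> sets N" for i using meas by measurable
  show "prob_max_le N \<xi> B u \<le> prob_max_le N \<xi> A u"
    unfolding prob_max_le_def using AB EA by (intro finite_measure_mono) auto
  have sub: "?E A \<subseteq> ?E B \<union> (\<Union>i\<in>B - A. ?F i)" using AB by auto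
  have U: "(\<Union>i\<in>B - A. ?F i) \<in> sets N" using F AB by auto
  have "measure N (?E A) \<le> measure N (?E B \<union> (\<Union>i\<in>B - A. ?F i))"
    using sub EB U by (intro finite_measure_mono) auto
  also have "\<dots> \<le> measure N (?E B) + measure N (\<Union>i\<in>B - A. ?F i)"
    using EB U by (intro measure_subadditive) (auto simp: emeasure_finite)
  also have "measure N (\<Union>i\<in>B - A. ?F i) \<le> (\<Sum>i\<in>B - A. measure N (?F i))"
    using AB F by (intro finite_measure_subadditive_finite) auto
  also have "\<dots> = real (card (B - A)) * p" using p by simp
  finally show "prob_max_le N \<xi> A u - prob_max_le N \<xi> B u \<le> real (card (B - A)) * p"
    unfolding prob_max_le_def by simp
qed

lemma pml_absdiff:
  assumes N: "prob_space N" and meas: "\<And>i. \<xi> i \<in> borel_measurable N"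
    and AB: "A \<subseteq> B" "finite B"
    and p: "\<And>i. measure N {s\<in>space N. \<xi> i s > u} = p"
  shows "\<bar>prob_max_le N \<xi> A u - prob_max_le N \<xi> B u\<bar> \<le> real (card (B - A)) * p"
  using pml_diff[of N \<xi>, OF assms] by linarith

lemma mix:
  assumes N: "prob_space N"
    and H: "\<And>I J. finite I \<Longrightarrow> I \<noteq> {} \<Longrightarrow> finite J \<Longrightarrow> J \<noteq> {} \<Longrightarrow>
         (\<forall>i\<in>I. \<forall>j\<in>J. i + int m \<le> j) \<Longrightarrow>
         \<bar>prob_max_le N \<xi> (I \<union> J) u - prob_max_le N \<xi> I u * prob_max_le N \<xi> J u\<bar> \<le> c"
    and c: "0 \<le> c" and IJ: "finite I" "finite J" "\<forall>i\<in>I. \<forall>j\<in>J. i + int m \<le> j"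
  shows "\<bar>prob_max_le N \<xi> (I \<union> J) u - prob_max_le N \<xi> I u * prob_max_le N \<xi> J u\<bar> \<le> c"
proof (cases "I = {} \<or> J = {}")
  case True then show ?thesis using pml_empty[OF N] c by auto
next
  case False then show ?thesis using H IJ by blast
qed

lemma prod_diff:
  fixes f g :: "'a \<Rightarrow> real"
  assumes "finite J" "\<And>j. 0 \<le> f j \<and> f j \<le> 1" "\<And>j. 0 \<le> g j \<and> g j \<le> 1"
  shows "\<bar>(\<Prod>j\<in>J. f j) - (\<Prod>j\<in>J. g j)\<bar> \<le> (\<Sum>j\<in>J. \<bar>f j - g j\<bar>)"
  using assms(1)
proof (induction J rule: finite_induct)
  case empty then show ?case by simp
next
  case (insert x F)
  let ?A = "\<Prod>j\<in>F. f j" let ?B = "\<Prod>j\<in>F. g j"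
  have B: "0 \<le> ?B \<and> ?B \<le> 1" using assms(3) by (simp add: prod_nonneg prod_le_1)
  have "f x * ?A - g x * ?B = f x * (?A - ?B) + (f x - g x) * ?B" by (simp add: algebra_simps)
  then have "\<bar>f x * ?A - g x * ?B\<bar> \<le> \<bar>f x\<bar> * \<bar>?A - ?B\<bar> + \<bar>f x - g x\<bar> * \<bar>?B\<bar>"
    by (metis abs_mult abs_triangle_ineq)
  also have "\<dots> \<le> 1 * \<bar>?A - ?B\<bar> + \<bar>f x - g x\<bar> * 1"
    using assms(2)[of x] B by (intro add_mono mult_mono) auto
  finally show ?case using insert by simp
qed



lemma abs_tri2: fixes a b e x y :: real
  shows "\<bar>a - b\<bar> \<le> x \<Longrightarrow> \<bar>b - e\<bar> \<le> y \<Longrightarrow> \<bar>a - e\<bar> \<le> x + y"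
  by (simp add: abs_le_iff)

lemma blocks_prod:
  assumes N: "prob_space N"
    and H: "\<And>I J. finite I \<Longrightarrow> I \<noteq> {} \<Longrightarrow> finite J \<Longrightarrow> J \<noteq> {} \<Longrightarrow>
         (\<forall>i\<in>I. \<forall>j\<in>J. i + int (l n) \<le> j) \<Longrightarrow>
         \<bar>prob_max_le N \<xi> (I \<union> J) u - prob_max_le N \<xi> I u * prob_max_le N \<xi> J u\<bar> \<le> c"
    and c: "0 \<le> c"
  shows "m \<le> num_blocks k X n \<omega> \<Longrightarrow>
    \<bar>prob_max_le N \<xi> (\<Union>j\<in>{1..m}. block k X n \<omega> j - stripes k l X n \<omega>) u
     - (\<Prod>j\<in>{1..m}. prob_max_le N \<xi> (block k X n \<omega> j - stripes k l X n \<omega>) u)\<bar> \<le> real m * c"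
proof (induction m)
  case 0 then show ?case using pml_empty[OF N] by simp
next
  case (Suc m)
  let ?L = "stripes k l X n \<omega>"
  let ?U = "\<Union>j\<in>{1..m}. block k X n \<omega> j - ?L"
  let ?J = "block k X n \<omega> (Suc m) - ?L"
  let ?P = "\<lambda>B. prob_max_le N \<xi> B u"
  let ?\<Pi> = "\<Prod>j\<in>{1..m}. ?P (block k X n \<omega> j - ?L)"
  have IH: "\<bar>?P ?U - ?\<Pi>\<bar> \<le> real m * c" using Suc by simp
  have fU: "finite ?U" using block_finite[of k X n \<omega>] by auto
  have fJ: "finite ?J" using block_finite[of k X n \<omega>] by auto
  have g: "\<forall>i\<in>?U. \<forall>j\<in>?J. i + int (l n) \<le> j"
    using gap[of _ "Suc m" k X n \<omega> _ l] Suc.prems by fastforce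
  have M: "\<bar>?P (?U \<union> ?J) - ?P ?U * ?P ?J\<bar> \<le> c"
    by (rule mix[OF N H c fU fJ g])
  have PJ: "0 \<le> ?P ?J \<and> ?P ?J \<le> 1" using pml_bounds[OF N] by blast
  have "\<bar>?P ?U * ?P ?J - ?\<Pi> * ?P ?J\<bar> = \<bar>?P ?U - ?\<Pi>\<bar> * ?P ?J"
    using PJ by (simp add: abs_mult left_diff_distrib[symmetric])
  also have "\<dots> \<le> \<bar>?P ?U - ?\<Pi>\<bar> * 1" using PJ by (intro mult_left_mono) auto
  finally have T: "\<bar>?P ?U * ?P ?J - ?\<Pi> * ?P ?J\<bar> \<le> \<bar>?P ?U - ?\<Pi>\<bar> * 1" .
  have "\<bar>?P (?U \<union> ?J) - ?\<Pi> * ?P ?J\<bar> \<le> c + real m * c"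
    using abs_tri2[OF M, of "?\<Pi> * ?P ?J" "real m * c"] T IH by simp
  moreover have "(\<Union>j\<in>{1..Suc m}. block k X n \<omega> j - ?L) = ?U \<union> ?J"
    by (auto simp: atLeastAtMostSuc_conv)
  moreover have "(\<Prod>j\<in>{1..Suc m}. ?P (block k X n \<omega> j - ?L)) = ?P ?J * ?\<Pi>"
    by (simp add: atLeastAtMostSuc_conv)
  ultimately show ?case by (simp add: algebra_simps)
qed



lemma stat_p:
  fixes \<xi> :: "int \<Rightarrow> 's \<Rightarrow> real"
  assumes meas: "\<And>i. \<xi> i \<in> borel_measurable N"
    and stationary: "\<And>h. distr N (PiM UNIV (\<lambda>_. borel)) (\<lambda>s i. \<xi> (i + h) s)
                         = distr N (PiM UNIV (\<lambda>_. borel)) (\<lambda>s i. \<xi> i s)"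
  shows "measure N {s\<in>space N. \<xi> h s > u} = measure N {s\<in>space N. \<xi> 0 s > (u::real)}"
proof -
  let ?PM = "PiM (UNIV::int set) (\<lambda>_. borel :: real measure)"
  let ?A = "{g \<in> space ?PM. u < g 0}"
  have A: "?A \<in> sets ?PM" by measurable
  have f: "(\<lambda>s i. \<xi> (i + h') s) \<in> measurable N ?PM" for h'
    by (rule measurable_PiM_single') (auto simp: meas)
  have eq: "measure (distr N ?PM (\<lambda>s i. \<xi> (i + h') s)) ?A = measure N {s\<in>space N. \<xi> h' s > u}" for h'
    by (subst measure_distr[OF f A]) (auto simp: space_PiM intro!: arg_cong[where f="measure N"])
  have "measure N {s\<in>space N. \<xi> h s > u} = measure (distr N ?PM (\<lambda>s i. \<xi> (i + h) s)) ?A"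
    using eq by simp
  also have "\<dots> = measure (distr N ?PM (\<lambda>s i. \<xi> (i + 0) s)) ?A"
    using stationary[of h] by simp
  also have "\<dots> = measure N {s\<in>space N. \<xi> 0 s > u}" by (rule eq)
  finally show ?thesis .
qed

lemma det_bounds:
  fixes \<xi> :: "int \<Rightarrow> 's \<Rightarrow> real"
  assumes N: "prob_space N" and meas: "\<And>i. \<xi> i \<in> borel_measurable N"
    and p: "\<And>i. measure N {s\<in>space N. \<xi> i s > u} = p"
    and H: "\<And>I J. finite I \<Longrightarrow> I \<noteq> {} \<Longrightarrow> finite J \<Longrightarrow> J \<noteq> {} \<Longrightarrow>
         (\<forall>i\<in>I. \<forall>j\<in>J. i + int (l n) \<le> j) \<Longrightarrow>
         \<bar>prob_max_le N \<xi> (I \<union> J) u - prob_max_le N \<xi> I u * prob_max_le N \<xi> J u\<bar> \<le> c"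
    and c: "0 \<le> c" and kge: "k n \<ge> 2"
  shows "\<bar>prob_max_le N \<xi> (range_set X n \<omega>) u
          - prob_max_le N \<xi> (range_set X n \<omega> - stripes k l X n \<omega>) u\<bar> \<le> real (k n * l n) * p"
    "\<bar>prob_max_le N \<xi> (range_set X n \<omega> - stripes k l X n \<omega>) u
          - (\<Prod>j\<in>{1..num_blocks k X n \<omega>}.
               prob_max_le N \<xi> (block k X n \<omega> j - stripes k l X n \<omega>) u)\<bar> \<le> real (k n) * c"
    "\<bar>(\<Prod>j\<in>{1..num_blocks k X n \<omega>}.
               prob_max_le N \<xi> (block k X n \<omega> j - stripes k l X n \<omega>) u)
          - (\<Prod>j\<in>{1..num_blocks k X n \<omega>}.
               prob_max_le N \<xi> (block k X n \<omega> j) u)\<bar> \<le> real (k n * l n) * p"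
proof -
  let ?S = "range_set X n \<omega>" let ?L = "stripes k l X n \<omega>" let ?K = "num_blocks k X n \<omega>"
  let ?B = "block k X n \<omega>" let ?P = "\<lambda>B. prob_max_le N \<xi> B u"
  have p0: "0 \<le> p" using p[of 0] by (metis measure_nonneg)
  have fS: "finite ?S" by (rule range_finite)
  have LS: "?L \<subseteq> ?S" by (rule stripes_sub)
  have fL: "finite ?L" using LS fS finite_subset by blast
  have KL: "card ?L \<le> k n * l n"
    using stripes_card[of k l X n \<omega>] num_blocks_le[where k=k and n=n and X=X and \<omega>=\<omega>, OF kge] mult_le_mono1 order_trans by blast
  then have "real (card ?L) \<le> real (k n * l n)" by (simp only: of_nat_le_iff)
  then have KLr: "real (card ?L) * p \<le> real (k n * l n) * p" using p0 by (rule mult_right_mono)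
  have "\<bar>?P (?S - ?L) - ?P ?S\<bar> \<le> real (card (?S - (?S - ?L))) * p"
    by (rule pml_absdiff[OF N meas _ fS p]) auto
  also have "card (?S - (?S - ?L)) \<le> card ?L" using fL by (intro card_mono) auto
  then have "real (card (?S - (?S - ?L))) * p \<le> real (card ?L) * p" using p0 by (intro mult_right_mono) auto
  finally show "\<bar>?P ?S - ?P (?S - ?L)\<bar> \<le> real (k n * l n) * p" using KLr by (simp add: abs_minus_commute)
  have U: "(\<Union>j\<in>{1..?K}. ?B j - ?L) = ?S - ?L" using blocks_cover[of k X n \<omega>] by blast
  have "\<bar>?P (\<Union>j\<in>{1..?K}. ?B j - ?L) - (\<Prod>j\<in>{1..?K}. ?P (?B j - ?L))\<bar> \<le> real ?K * c"
    by (rule blocks_prod[where N=N and \<xi>=\<xi> and u=u and c=c and l=l and n=n and m="?K" and k=k and X=X and \<omega>=\<omega>, OF N H c order_refl])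
  then have "\<bar>?P (?S - ?L) - (\<Prod>j\<in>{1..?K}. ?P (?B j - ?L))\<bar> \<le> real ?K * c"
    unfolding U .
  also have "\<dots> \<le> real (k n) * c" using num_blocks_le[where k=k and n=n and X=X and \<omega>=\<omega>, OF kge] c by (intro mult_right_mono) auto
  finally show "\<bar>?P (?S - ?L) - (\<Prod>j\<in>{1..?K}. ?P (?B j - ?L))\<bar> \<le> real (k n) * c" .
  have "\<bar>(\<Prod>j\<in>{1..?K}. ?P (?B j - ?L)) - (\<Prod>j\<in>{1..?K}. ?P (?B j))\<bar>
        \<le> (\<Sum>j\<in>{1..?K}. \<bar>?P (?B j - ?L) - ?P (?B j)\<bar>)"
    by (rule prod_diff) (auto simp: pml_bounds[OF N])
  also have "\<dots> \<le> (\<Sum>j\<in>{1..?K}. real (card (?B j \<inter> ?L)) * p)"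
  proof (rule sum_mono)
    fix j
    have "\<bar>?P (?B j - ?L) - ?P (?B j)\<bar> \<le> real (card (?B j - (?B j - ?L))) * p"
      by (rule pml_absdiff[OF N meas _ block_finite p]) auto
    moreover have "?B j - (?B j - ?L) = ?B j \<inter> ?L" by blast
    ultimately show "\<bar>?P (?B j - ?L) - ?P (?B j)\<bar> \<le> real (card (?B j \<inter> ?L)) * p" by simp
  qed
  also have "\<dots> = real (\<Sum>j\<in>{1..?K}. card (?B j \<inter> ?L)) * p"
    by (simp add: sum_distrib_right)
  also have "(\<Sum>j\<in>{1..?K}. card (?B j \<inter> ?L)) = card (\<Union>j\<in>{1..?K}. ?B j \<inter> ?L)"
  proof (rule card_UN_disjoint[symmetric])
    show "finite {1..?K}" by simp
    show "\<forall>j\<in>{1..?K}. finite (?B j \<inter> ?L)" using block_finite[of k X n \<omega>] by blast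
    show "\<forall>j\<in>{1..?K}. \<forall>j'\<in>{1..?K}. j \<noteq> j' \<longrightarrow> (?B j \<inter> ?L) \<inter> (?B j' \<inter> ?L) = {}"
      using block_disj[where k=k and X=X and n=n and \<omega>=\<omega>] by fastforce
  qed
  also have "card (\<Union>j\<in>{1..?K}. ?B j \<inter> ?L) \<le> card ?L" using fL by (intro card_mono) auto
  then have "real (card (\<Union>j\<in>{1..?K}. ?B j \<inter> ?L)) * p \<le> real (card ?L) * p"
    using p0 by (intro mult_right_mono) auto
  finally show "\<bar>(\<Prod>j\<in>{1..?K}. ?P (?B j - ?L)) - (\<Prod>j\<in>{1..?K}. ?P (?B j))\<bar> \<le> real (k n * l n) * p"
    using KLr by linarith
qed


lemma bound_conv:
  fixes f g h :: "nat \<Rightarrow> real"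
  assumes "\<And>n. P n \<Longrightarrow> \<bar>f n\<bar> \<le> h n" "\<And>n. P n \<Longrightarrow> h n = g n"
    "eventually P sequentially" "g \<longlonglongrightarrow> 0"
  shows "f \<longlonglongrightarrow> 0"
proof (rule Lim_null_comparison[OF _ assms(4)])
  show "\<forall>\<^sub>F n in sequentially. norm (f n) \<le> g n"
    using assms(3) by (rule eventually_mono) (use assms(1,2) in force)
qed

theorem lemma1:
  fixes M :: "'w measure" and X :: "nat \<Rightarrow> 'w \<Rightarrow> int" and \<alpha> :: real
    and N :: "'s measure" and \<xi> :: "int \<Rightarrow> 's \<Rightarrow> real"
    and u :: "nat \<Rightarrow> real" and \<tau> :: real
    and a :: "nat \<Rightarrow> nat \<Rightarrow> real" and l :: "nat \<Rightarrow> nat" and k :: "nat \<Rightarrow> nat"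
  assumes walk_space: "prob_space M"
    and X_meas: "\<And>i. X i \<in> measurable M (count_space UNIV)"
    and X_indep: "prob_space.indep_vars M (\<lambda>_. count_space UNIV) X {1..}"
    and X_ident: "\<And>i. i \<ge> 1 \<Longrightarrow> distr M (count_space UNIV) (X i) = distr M (count_space UNIV) (X 1)"
    and alpha: "0 < \<alpha>" "\<alpha> < 1"
    and attraction: "centered_domain_of_attraction M X \<alpha>"
    and scen_space: "prob_space N"
    and \<xi>_meas: "\<And>i. \<xi> i \<in> borel_measurable N"
    and stationary: "\<And>h. distr N (PiM UNIV (\<lambda>_. borel)) (\<lambda>s i. \<xi> (i + h) s)
                         = distr N (PiM UNIV (\<lambda>_. borel)) (\<lambda>s i. \<xi> i s)"
    and tau: "\<tau> \<ge> 0"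
      "(\<lambda>n. real n * measure N {s \<in> space N. \<xi> 0 s > u n}) \<longlonglongrightarrow> \<tau>"
    and D_l_pos: "\<And>n. l n > 0"
    and D_alpha: "(\<lambda>n. a n (l n)) \<longlonglongrightarrow> 0"
    and D_l_small: "(\<lambda>n. real (l n) / real n) \<longlonglongrightarrow> 0"
    and D_mixing: "\<And>n m I J. finite I \<Longrightarrow> I \<noteq> {} \<Longrightarrow> finite J \<Longrightarrow> J \<noteq> {} \<Longrightarrow>
         (\<forall>i\<in>I. \<forall>j\<in>J. i + int m \<le> j) \<Longrightarrow>
         \<bar>prob_max_le N \<xi> (I \<union> J) (u n) - prob_max_le N \<xi> I (u n) * prob_max_le N \<xi> J (u n)\<bar>
           \<le> a n m"
    and D'_k: "filterlim k at_top sequentially"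
    and D'_alpha: "(\<lambda>n. real n ^ 2 / real (k n) * a n (l n)) \<longlonglongrightarrow> 0"
    and D'_kl: "(\<lambda>n. real (k n * l n) / real n) \<longlonglongrightarrow> 0"
    and D'_sum: "(\<lambda>n. real n * (\<Sum>j\<in>{1..n div k n}.
                   measure N {s \<in> space N. \<xi> 0 s > u n \<and> \<xi> (int j) s > u n})) \<longlonglongrightarrow> 0"
  shows "AE \<omega> in M.
     (\<lambda>n. prob_max_le N \<xi> (range_set X n \<omega>) (u n)
          - prob_max_le N \<xi> (range_set X n \<omega> - stripes k l X n \<omega>) (u n)) \<longlonglongrightarrow> 0
   \<and> (\<lambda>n. prob_max_le N \<xi> (range_set X n \<omega> - stripes k l X n \<omega>) (u n)
          - (\<Prod>j\<in>{1..num_blocks k X n \<omega>}.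
               prob_max_le N \<xi> (block k X n \<omega> j - stripes k l X n \<omega>) (u n))) \<longlonglongrightarrow> 0
   \<and> (\<lambda>n. (\<Prod>j\<in>{1..num_blocks k X n \<omega>}.
               prob_max_le N \<xi> (block k X n \<omega> j - stripes k l X n \<omega>) (u n))
          - (\<Prod>j\<in>{1..num_blocks k X n \<omega>}.
               prob_max_le N \<xi> (block k X n \<omega> j) (u n))) \<longlonglongrightarrow> 0"
proof -
  define p where "p n = measure N {s \<in> space N. \<xi> 0 s > u n}" for n
  have pi: "\<And>n i. measure N {s\<in>space N. \<xi> i s > u n} = p n"
    unfolding p_def by (rule stat_p[OF \<xi>_meas stationary])
  have c0: "0 \<le> a n (l n)" for n
  proof -
    have "\<bar>prob_max_le N \<xi> ({0} \<union> {int (l n)}) (u n) - prob_max_le N \<xi> {0} (u n) * prob_max_le N \<xi> {int (l n)} (u n)\<bar> \<le> a n (l n)"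
      by (rule D_mixing) auto
    then show ?thesis by (rule order_trans[OF abs_ge_zero])
  qed
  have DB: "\<bar>prob_max_le N \<xi> (range_set X n \<omega>) (u n)
          - prob_max_le N \<xi> (range_set X n \<omega> - stripes k l X n \<omega>) (u n)\<bar> \<le> real (k n * l n) * p n
    \<and> \<bar>prob_max_le N \<xi> (range_set X n \<omega> - stripes k l X n \<omega>) (u n)
          - (\<Prod>j\<in>{1..num_blocks k X n \<omega>}.
               prob_max_le N \<xi> (block k X n \<omega> j - stripes k l X n \<omega>) (u n))\<bar> \<le> real (k n) * a n (l n)
    \<and> \<bar>(\<Prod>j\<in>{1..num_blocks k X n \<omega>}.
               prob_max_le N \<xi> (block k X n \<omega> j - stripes k l X n \<omega>) (u n))
          - (\<Prod>j\<in>{1..num_blocks k X n \<omega>}.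
               prob_max_le N \<xi> (block k X n \<omega> j) (u n))\<bar> \<le> real (k n * l n) * p n"
    if "2 \<le> k n" for n \<omega>
    using det_bounds[where N=N and \<xi>=\<xi> and u="u n" and p="p n" and l=l and n=n and c="a n (l n)"
        and k=k and X=X and \<omega>=\<omega>, OF scen_space \<xi>_meas pi D_mixing c0 that] by blast
  have DB1: "\<bar>prob_max_le N \<xi> (range_set X n \<omega>) (u n)
          - prob_max_le N \<xi> (range_set X n \<omega> - stripes k l X n \<omega>) (u n)\<bar> \<le> real (k n * l n) * p n"
    and DB2: "\<bar>prob_max_le N \<xi> (range_set X n \<omega> - stripes k l X n \<omega>) (u n)
          - (\<Prod>j\<in>{1..num_blocks k X n \<omega>}.
               prob_max_le N \<xi> (block k X n \<omega> j - stripes k l X n \<omega>) (u n))\<bar> \<le> real (k n) * a n (l n)"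
    and DB3: "\<bar>(\<Prod>j\<in>{1..num_blocks k X n \<omega>}.
               prob_max_le N \<xi> (block k X n \<omega> j - stripes k l X n \<omega>) (u n))
          - (\<Prod>j\<in>{1..num_blocks k X n \<omega>}.
               prob_max_le N \<xi> (block k X n \<omega> j) (u n))\<bar> \<le> real (k n * l n) * p n"
    if "2 \<le> k n" for n \<omega> using DB[OF that] by blast+
  have ev: "eventually (\<lambda>n. 2 \<le> k n \<and> 0 < n) sequentially"
    using D'_k eventually_gt_at_top[of "0::nat"] unfolding filterlim_at_top
    by (auto intro: eventually_conj)
  have kn0: "(\<lambda>n. real (k n) / real n) \<longlonglongrightarrow> 0"
  proof (rule tendsto_sandwich[OF _ _ tendsto_const D'_kl])
    show "\<forall>\<^sub>F n in sequentially. 0 \<le> real (k n) / real n" by simp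
    show "\<forall>\<^sub>F n in sequentially. real (k n) / real n \<le> real (k n * l n) / real n"
    proof (rule always_eventually, rule allI)
      fix n
      have "real (k n) * 1 \<le> real (k n) * real (l n)" using D_l_pos[of n] by (intro mult_left_mono) auto
      then have "real (k n) \<le> real (k n * l n)" by simp
      then show "real (k n) / real n \<le> real (k n * l n) / real n" by (simp add: divide_right_mono)
    qed
  qed
  have g1: "(\<lambda>n. real (k n * l n) / real n * (real n * p n)) \<longlonglongrightarrow> 0"
  proof -
    have tau': "(\<lambda>n. real n * p n) \<longlonglongrightarrow> \<tau>" using tau(2) unfolding p_def .
    have "(\<lambda>n. real (k n * l n) / real n * (real n * p n)) \<longlonglongrightarrow> 0 * \<tau>"
      by (rule tendsto_mult[OF D'_kl tau'])
    then show ?thesis by (simp only: mult_zero_left)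
  qed
  have g2: "(\<lambda>n. (real (k n) / real n)^2 * (real n ^ 2 / real (k n) * a n (l n))) \<longlonglongrightarrow> 0"
  proof -
    have "(\<lambda>n. (real (k n) / real n)^2 * (real n ^ 2 / real (k n) * a n (l n))) \<longlonglongrightarrow> 0^2 * 0"
      by (rule tendsto_mult[OF tendsto_power[OF kn0] D'_alpha])
    then show ?thesis by (simp only: mult_zero_right)
  qed
  have e1: "real (k n * l n) * p n = real (k n * l n) / real n * (real n * p n)" if "0 < n" for n
    using that by simp
  have e2: "real (k n) * a n (l n) = (real (k n) / real n)^2 * (real n ^ 2 / real (k n) * a n (l n))"
    if "0 < n" "2 \<le> k n" for n
  proof -
    have "real n \<noteq> 0" "real (k n) \<noteq> 0" using that by auto
    then show ?thesis by (simp add: power2_eq_square)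
  qed
  show ?thesis
  proof (rule AE_I2, intro conjI)
    fix \<omega>
    define d1 where "d1 = (\<lambda>n. prob_max_le N \<xi> (range_set X n \<omega>) (u n)
          - prob_max_le N \<xi> (range_set X n \<omega> - stripes k l X n \<omega>) (u n))"
    have b_d1: "\<bar>d1 n\<bar> \<le> real (k n * l n) / real n * (real n * p n)" if "2 \<le> k n" "0 < n" for n
    proof -
      have "\<bar>d1 n\<bar> \<le> real (k n * l n) * p n" unfolding d1_def by (rule DB1[OF that(1)])
      also have "\<dots> = real (k n * l n) / real n * (real n * p n)" by (rule e1[OF that(2)])
      finally show ?thesis .
    qed
    have "d1 \<longlonglongrightarrow> 0"
    proof (rule Lim_null_comparison[OF _ g1])
      show "\<forall>\<^sub>F n in sequentially. norm (d1 n) \<le> real (k n * l n) / real n * (real n * p n)"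
        using ev by (rule eventually_mono) (unfold real_norm_def, erule conjE, erule b_d1, assumption)
    qed
    then show "(\<lambda>n. prob_max_le N \<xi> (range_set X n \<omega>) (u n)
          - prob_max_le N \<xi> (range_set X n \<omega> - stripes k l X n \<omega>) (u n)) \<longlonglongrightarrow> 0" unfolding d1_def .
    define d2 where "d2 = (\<lambda>n. prob_max_le N \<xi> (range_set X n \<omega> - stripes k l X n \<omega>) (u n)
          - (\<Prod>j\<in>{1..num_blocks k X n \<omega>}.
               prob_max_le N \<xi> (block k X n \<omega> j - stripes k l X n \<omega>) (u n)))"
    have b_d2: "\<bar>d2 n\<bar> \<le> (real (k n) / real n)^2 * (real n ^ 2 / real (k n) * a n (l n))" if "2 \<le> k n" "0 < n" for n
    proof -
      have "\<bar>d2 n\<bar> \<le> real (k n) * a n (l n)" unfolding d2_def by (rule DB2[OF that(1)])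
      also have "\<dots> = (real (k n) / real n)^2 * (real n ^ 2 / real (k n) * a n (l n))" by (rule e2[OF that(2,1)])
      finally show ?thesis .
    qed
    have "d2 \<longlonglongrightarrow> 0"
    proof (rule Lim_null_comparison[OF _ g2])
      show "\<forall>\<^sub>F n in sequentially. norm (d2 n) \<le> (real (k n) / real n)^2 * (real n ^ 2 / real (k n) * a n (l n))"
        using ev by (rule eventually_mono) (unfold real_norm_def, erule conjE, erule b_d2, assumption)
    qed
    then show "(\<lambda>n. prob_max_le N \<xi> (range_set X n \<omega> - stripes k l X n \<omega>) (u n)
          - (\<Prod>j\<in>{1..num_blocks k X n \<omega>}.
               prob_max_le N \<xi> (block k X n \<omega> j - stripes k l X n \<omega>) (u n))) \<longlonglongrightarrow> 0" unfolding d2_def .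
    define d3 where "d3 = (\<lambda>n. (\<Prod>j\<in>{1..num_blocks k X n \<omega>}.
               prob_max_le N \<xi> (block k X n \<omega> j - stripes k l X n \<omega>) (u n))
          - (\<Prod>j\<in>{1..num_blocks k X n \<omega>}.
               prob_max_le N \<xi> (block k X n \<omega> j) (u n)))"
    have b_d3: "\<bar>d3 n\<bar> \<le> real (k n * l n) / real n * (real n * p n)" if "2 \<le> k n" "0 < n" for n
    proof -
      have "\<bar>d3 n\<bar> \<le> real (k n * l n) * p n" unfolding d3_def by (rule DB3[OF that(1)])
      also have "\<dots> = real (k n * l n) / real n * (real n * p n)" by (rule e1[OF that(2)])
      finally show ?thesis .
    qed
    have "d3 \<longlonglongrightarrow> 0"
    proof (rule Lim_null_comparison[OF _ g1])
      show "\<forall>\<^sub>F n in sequentially. norm (d3 n) \<le> real (k n * l n) / real n * (real n * p n)"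
        using ev by (rule eventually_mono) (unfold real_norm_def, erule conjE, erule b_d3, assumption)
    qed
    then show "(\<lambda>n. (\<Prod>j\<in>{1..num_blocks k X n \<omega>}.
               prob_max_le N \<xi> (block k X n \<omega> j - stripes k l X n \<omega>) (u n))
          - (\<Prod>j\<in>{1..num_blocks k X n \<omega>}.
               prob_max_le N \<xi> (block k X n \<omega> j) (u n))) \<longlonglongrightarrow> 0" unfolding d3_def .
  qed
qed

end
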